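(* Let $d \geq 2$, $N, K \geq 1$ be integers, $\mathbf{y}_1,\ldots,\mathbf{y}_N \in \mathbb{R}^d$ with matrix $\mathbf{Y} = [\mathbf{y}_1,\ldots,\mathbf{y}_N]$, and $\rho_k^{[i]} \geq 0$ with $\sum_{k=1}^K \rho_k^{[i]} = 1$ for each $i$. Put $\mathbf{A}_k = \sum_{i} \rho_k^{[i]}\mathbf{y}_i\mathbf{y}_i^\mathrm{T}$, $\gamma_k = \sum_i \rho_k^{[i]}$, $\lambda_k = $ largest eigenvalue of $\mathbf{A}_k$. For $S \subseteq [K]$ define $\sigma^2(S) = \big(\|\mathbf{Y}\|_\mathrm{F}^2 - \sum_{k\in S}\lambda_k\big)/\big(dN - \sum_{k\in S}\gamma_k\big)$ and $g(S) = \big[dN - \sum_{k\in S}\gamma_k\big]\ln\sigma^2(S) + \sum_{k\in S}\gamma_k\ln(\lambda_k/\gamma_k)$, and assume $\gamma_k>0$, $\lambda_k>0$ for all $k$ and $\sigma^2(S)>0$ for all $S\subseteq[K]$. Let $\mathcal{V} = \{S \subseteq [K] : \sigma^2(S) \leq \lambda_k/\gamma_k \text{ for all } k\in S\}$. Consider the procedure: start with $S = \emptyset$; while the set $L = \{k \in [K]\setminus S : \sigma^2(S) \leq \lambda_k/\gamma_k\}$ is nonempty, choose any $k^\star \in L$ and replace $S$ by $S\cup\{k^\star\}$. Then this procedure terminates, every set $S$ it produces lies in $\mathcal{V}$, and its output is the unique saturated set (a set $S\in\mathcal{V}$ with $\sigma^2(S) > \lambda_j/\gamma_j$ for all $j \notin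 S$), which is a minimizer of $g$ over $\mathcal{V}$.
   Context: $[K] = \{1,\ldots,K\}$; $\|\cdot\|_\mathrm{F}$ is the Frobenius norm. *)

theory Defs
  imports "HOL-Analysis.Analysis"
begin

definition outer :: "real^'d \<Rightarrow> real^'d^'d" where
  "outer v = (\<chi> a b. v $ a * v $ b)"

definition is_eigenvalue :: "real^'n^'n \<Rightarrow> real \<Rightarrow> bool" where
  "is_eigenvalue A \<mu> \<longleftrightarrow> (\<exists>v. v \<noteq> 0 \<and> A *v v = \<mu> *\<^sub>R v)"

definition largest_eigenvalue :: "real^'n^'n \<Rightarrow> real" where
  "largest_eigenvalue A = Max {\<mu>. is_eigenvalue A \<mu>}"

definition Amat :: "(nat \<Rightarrow> real^'d) \<Rightarrow> (nat \<Rightarrow> nat \<Rightarrow> real) \<Rightarrow> nat \<Rightarrow> nat \<Rightarrow> real^'d^'d" where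
  "Amat y \<rho> N k = (\<Sum>i\<in>{1..N}. \<rho> k i *\<^sub>R outer (y i))"

definition gam :: "(nat \<Rightarrow> nat \<Rightarrow> real) \<Rightarrow> nat \<Rightarrow> nat \<Rightarrow> real" where
  "gam \<rho> N k = (\<Sum>i\<in>{1..N}. \<rho> k i)"

definition lam :: "(nat \<Rightarrow> real^'d) \<Rightarrow> (nat \<Rightarrow> nat \<Rightarrow> real) \<Rightarrow> nat \<Rightarrow> nat \<Rightarrow> real" where
  "lam y \<rho> N k = largest_eigenvalue (Amat y \<rho> N k)"

definition frob_sq :: "(nat \<Rightarrow> real^'d) \<Rightarrow> nat \<Rightarrow> real" where
  "frob_sq y N = (\<Sum>i\<in>{1..N}. \<Sum>j\<in>UNIV. (y i $ j)^2)"

definition sigma2 :: "(nat \<Rightarrow> real^'d) \<Rightarrow> (nat \<Rightarrow> nat \<Rightarrow> real) \<Rightarrow> nat \<Rightarrow> nat set \<Rightarrow> real" where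
  "sigma2 y \<rho> N S =
     (frob_sq y N - (\<Sum>k\<in>S. lam y \<rho> N k)) /
     (real CARD('d) * real N - (\<Sum>k\<in>S. gam \<rho> N k))"

definition gfun :: "(nat \<Rightarrow> real^'d) \<Rightarrow> (nat \<Rightarrow> nat \<Rightarrow> real) \<Rightarrow> nat \<Rightarrow> nat set \<Rightarrow> real" where
  "gfun y \<rho> N S =
     (real CARD('d) * real N - (\<Sum>k\<in>S. gam \<rho> N k)) * ln (sigma2 y \<rho> N S)
     + (\<Sum>k\<in>S. gam \<rho> N k * ln (lam y \<rho> N k / gam \<rho> N k))"

definition Vset :: "(nat \<Rightarrow> real^'d) \<Rightarrow> (nat \<Rightarrow> nat \<Rightarrow> real) \<Rightarrow> nat \<Rightarrow> nat \<Rightarrow> nat set set" where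
  "Vset y \<rho> N K = {S. S \<subseteq> {1..K} \<and>
      (\<forall>k\<in>S. sigma2 y \<rho> N S \<le> lam y \<rho> N k / gam \<rho> N k)}"

definition Lset :: "(nat \<Rightarrow> real^'d) \<Rightarrow> (nat \<Rightarrow> nat \<Rightarrow> real) \<Rightarrow> nat \<Rightarrow> nat \<Rightarrow> nat set \<Rightarrow> nat set" where
  "Lset y \<rho> N K S = {k \<in> {1..K} - S. sigma2 y \<rho> N S \<le> lam y \<rho> N k / gam \<rho> N k}"

definition proc_step :: "(nat \<Rightarrow> real^'d) \<Rightarrow> (nat \<Rightarrow> nat \<Rightarrow> real) \<Rightarrow> nat \<Rightarrow> nat \<Rightarrow> nat set \<Rightarrow> nat set \<Rightarrow> bool" where
  "proc_step y \<rho> N K S S' \<longleftrightarrow> (\<exists>k\<in>Lset y \<rho> N K S. S' = insert k S)"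

definition saturated :: "(nat \<Rightarrow> real^'d) \<Rightarrow> (nat \<Rightarrow> nat \<Rightarrow> real) \<Rightarrow> nat \<Rightarrow> nat \<Rightarrow> nat set \<Rightarrow> bool" where
  "saturated y \<rho> N K S \<longleftrightarrow> S \<in> Vset y \<rho> N K \<and>
     (\<forall>j\<in>{1..K} - S. sigma2 y \<rho> N S > lam y \<rho> N j / gam \<rho> N j)"

end

theory Submission
  imports Defs
begin

context
  fixes y :: "nat \<Rightarrow> real^'d" and \<rho> :: "nat \<Rightarrow> nat \<Rightarrow> real" and N K :: nat
  assumes d2: "CARD('d) \<ge> 2" and N1: "N \<ge> 1"
    and rho_sum: "\<And>i. i \<in> {1..N} \<Longrightarrow> (\<Sum>k\<in>{1..K}. \<rho> k i) = 1"
    and gam_pos: "\<And>k. k \<in> {1..K} \<Longrightarrow> gam \<rho> N k > 0"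
    and lam_pos: "\<And>k. k \<in> {1..K} \<Longrightarrow> lam y \<rho> N k > 0"
    and sigma_pos: "\<And>S. S \<subseteq> {1..K} \<Longrightarrow> sigma2 y \<rho> N S > 0"
begin

lemma gam_sum: "(\<Sum>k\<in>{1..K}. gam \<rho> N k) = real N"
proof -
  have "(\<Sum>k\<in>{1..K}. gam \<rho> N k) = (\<Sum>i\<in>{1..N}. \<Sum>k\<in>{1..K}. \<rho> k i)"
    unfolding gam_def by (rule sum.swap)
  also have "\<dots> = (\<Sum>i\<in>{1..N}. 1)" using rho_sum by simp
  finally show ?thesis by simp
qed

lemma B_pos: "S \<subseteq> {1..K} \<Longrightarrow> real CARD('d) * real N - (\<Sum>k\<in>S. gam \<rho> N k) > 0"
proof -
  assume S: "S \<subseteq> {1..K}"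
  have "(\<Sum>k\<in>S. gam \<rho> N k) \<le> (\<Sum>k\<in>{1..K}. gam \<rho> N k)"
    by (rule sum_mono2) (use S gam_pos in \<open>auto intro: less_imp_le\<close>)
  moreover have "real CARD('d) * real N \<ge> 2 * real N"
    using d2 by (intro mult_right_mono) auto
  ultimately show ?thesis using gam_sum N1 by linarith
qed

lemma A_pos: "S \<subseteq> {1..K} \<Longrightarrow> frob_sq y N - (\<Sum>k\<in>S. lam y \<rho> N k) > 0"
  using sigma_pos[of S] B_pos[of S] unfolding sigma2_def
  by (simp add: zero_less_divide_iff)

lemma sig_eq: "S \<subseteq> {1..K} \<Longrightarrow>
  sigma2 y \<rho> N S * (real CARD('d) * real N - (\<Sum>k\<in>S. gam \<rho> N k))
   = frob_sq y N - (\<Sum>k\<in>S. lam y \<rho> N k)"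
  using B_pos[of S] unfolding sigma2_def by simp

lemma med:
  assumes S: "S \<subseteq> {1..K}" and k: "k \<in> {1..K} - S"
    and le: "sigma2 y \<rho> N S \<le> lam y \<rho> N k / gam \<rho> N k"
  shows "sigma2 y \<rho> N (insert k S) \<le> sigma2 y \<rho> N S"
proof -
  define A where "A = frob_sq y N - (\<Sum>k\<in>S. lam y \<rho> N k)"
  define B where "B = real CARD('d) * real N - (\<Sum>k\<in>S. gam \<rho> N k)"
  have fin: "finite S" using S finite_subset by blast
  have S': "insert k S \<subseteq> {1..K}" using S k by auto
  have B: "B > 0" using B_pos[OF S] B_def by simp
  have B': "B - gam \<rho> N k > 0" using B_pos[OF S'] fin k B_def by simp
  have g: "gam \<rho> N k > 0" using gam_pos k by auto
  have s1: "sigma2 y \<rho> N S = A / B" unfolding sigma2_def A_def B_def by simp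
  have s2: "sigma2 y \<rho> N (insert k S) = (A - lam y \<rho> N k) / (B - gam \<rho> N k)"
    unfolding sigma2_def A_def B_def using fin k by (simp add: algebra_simps)
  have "A * gam \<rho> N k \<le> lam y \<rho> N k * B"
    using le s1 B g by (simp add: divide_simps)
  hence "(A - lam y \<rho> N k) * B \<le> A * (B - gam \<rho> N k)" by (simp add: algebra_simps)
  thus ?thesis unfolding s1 s2 using B B' by (simp add: divide_simps)
qed

definition Gf :: "real \<Rightarrow> real" where
  "Gf s = frob_sq y N - s * (real CARD('d) * real N)
     - (\<Sum>k\<in>{1..K}. gam \<rho> N k * max 0 (lam y \<rho> N k / gam \<rho> N k - s))"

lemma Gf_mono: assumes "s1 < s2" shows "Gf s2 < Gf s1"
proof -
  have "(\<Sum>k\<in>{1..K}. gam \<rho> N k * max 0 (lam y \<rho> N k / gam \<rho> N k - s1))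
     - (\<Sum>k\<in>{1..K}. gam \<rho> N k * max 0 (lam y \<rho> N k / gam \<rho> N k - s2))
     = (\<Sum>k\<in>{1..K}. gam \<rho> N k * (max 0 (lam y \<rho> N k / gam \<rho> N k - s1)
          - max 0 (lam y \<rho> N k / gam \<rho> N k - s2)))"
    by (simp add: sum_subtractf algebra_simps)
  also have "\<dots> \<le> (\<Sum>k\<in>{1..K}. gam \<rho> N k * (s2 - s1))"
  proof (rule sum_mono)
    fix k assume "k \<in> {1..K}"
    hence "gam \<rho> N k > 0" using gam_pos by auto
    moreover have "max 0 (lam y \<rho> N k / gam \<rho> N k - s1)
          - max 0 (lam y \<rho> N k / gam \<rho> N k - s2) \<le> s2 - s1" using assms by linarith
    ultimately show "gam \<rho> N k * (max 0 (lam y \<rho> N k / gam \<rho> N k - s1)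
          - max 0 (lam y \<rho> N k / gam \<rho> N k - s2)) \<le> gam \<rho> N k * (s2 - s1)"
      by (intro mult_left_mono) auto
  qed
  also have "\<dots> = real N * (s2 - s1)" using gam_sum by (simp add: sum_distrib_right[symmetric])
  finally have 1: "(\<Sum>k\<in>{1..K}. gam \<rho> N k * max 0 (lam y \<rho> N k / gam \<rho> N k - s1))
     - (\<Sum>k\<in>{1..K}. gam \<rho> N k * max 0 (lam y \<rho> N k / gam \<rho> N k - s2)) \<le> real N * (s2 - s1)" .
  have "real CARD('d) * real N \<ge> 2 * real N"
    using d2 by (intro mult_right_mono) auto
  hence "(s2 - s1) * (real CARD('d) * real N) > (s2 - s1) * real N"
    using assms N1 by (intro mult_strict_left_mono) auto
  thus ?thesis using 1 unfolding Gf_def by (simp add: algebra_simps)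
qed

lemma key_eq: "S \<subseteq> {1..K} \<Longrightarrow>
   frob_sq y N - s * (real CARD('d) * real N) - (\<Sum>k\<in>S. gam \<rho> N k * (lam y \<rho> N k / gam \<rho> N k - s))
   = (frob_sq y N - (\<Sum>k\<in>S. lam y \<rho> N k)) - s * (real CARD('d) * real N - (\<Sum>k\<in>S. gam \<rho> N k))"
proof -
  assume S: "S \<subseteq> {1..K}"
  have "(\<Sum>k\<in>S. gam \<rho> N k * (lam y \<rho> N k / gam \<rho> N k - s))
      = (\<Sum>k\<in>S. lam y \<rho> N k - s * gam \<rho> N k)"
  proof (rule sum.cong)
    fix k assume "k \<in> S"
    hence "gam \<rho> N k > 0" using S gam_pos by auto
    thus "gam \<rho> N k * (lam y \<rho> N k / gam \<rho> N k - s) = lam y \<rho> N k - s * gam \<rho> N k"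
      by (simp add: field_simps)
  qed simp
  thus ?thesis by (simp add: sum_subtractf sum_distrib_left algebra_simps)
qed

lemma Gf_V: assumes "T \<in> Vset y \<rho> N K" shows "Gf (sigma2 y \<rho> N T) \<le> 0"
proof -
  let ?s = "sigma2 y \<rho> N T"
  have T: "T \<subseteq> {1..K}" and TV: "\<forall>k\<in>T. ?s \<le> lam y \<rho> N k / gam \<rho> N k"
    using assms unfolding Vset_def by auto
  have "(\<Sum>k\<in>T. gam \<rho> N k * (lam y \<rho> N k / gam \<rho> N k - ?s))
     = (\<Sum>k\<in>T. gam \<rho> N k * max 0 (lam y \<rho> N k / gam \<rho> N k - ?s))"
    by (rule sum.cong) (use TV in auto)
  also have "\<dots> \<le> (\<Sum>k\<in>{1..K}. gam \<rho> N k * max 0 (lam y \<rho> N k / gam \<rho> N k - ?s))"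
    by (rule sum_mono2) (use T in \<open>auto intro!: mult_nonneg_nonneg simp: gam_pos less_imp_le\<close>)
  finally have "Gf ?s \<le> frob_sq y N - ?s * (real CARD('d) * real N)
     - (\<Sum>k\<in>T. gam \<rho> N k * (lam y \<rho> N k / gam \<rho> N k - ?s))" unfolding Gf_def by simp
  also have "\<dots> = 0" unfolding key_eq[OF T] using sig_eq[OF T] by simp
  finally show ?thesis .
qed

lemma Gf_sat: assumes "saturated y \<rho> N K S" shows "Gf (sigma2 y \<rho> N S) = 0"
proof -
  let ?s = "sigma2 y \<rho> N S"
  have S: "S \<subseteq> {1..K}" and SV: "\<forall>k\<in>S. ?s \<le> lam y \<rho> N k / gam \<rho> N k"
    and out: "\<forall>j\<in>{1..K} - S. ?s > lam y \<rho> N j / gam \<rho> N j"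
    using assms unfolding Vset_def saturated_def by auto
  have "(\<Sum>k\<in>{1..K}. gam \<rho> N k * max 0 (lam y \<rho> N k / gam \<rho> N k - ?s))
      = (\<Sum>k\<in>S. gam \<rho> N k * max 0 (lam y \<rho> N k / gam \<rho> N k - ?s))"
    by (rule sum.mono_neutral_right) (use S out in auto)
  also have "\<dots> = (\<Sum>k\<in>S. gam \<rho> N k * (lam y \<rho> N k / gam \<rho> N k - ?s))"
    by (rule sum.cong) (use SV in auto)
  finally have "Gf ?s = frob_sq y N - ?s * (real CARD('d) * real N)
     - (\<Sum>k\<in>S. gam \<rho> N k * (lam y \<rho> N k / gam \<rho> N k - ?s))" unfolding Gf_def by simp
  also have "\<dots> = 0" unfolding key_eq[OF S] using sig_eq[OF S] by simp
  finally show ?thesis .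
qed

lemma V_sub_sat:
  assumes sat: "saturated y \<rho> N K S" and T: "T \<in> Vset y \<rho> N K"
  shows "T \<subseteq> S"
proof -
  have le: "sigma2 y \<rho> N S \<le> sigma2 y \<rho> N T"
  proof (rule ccontr)
    assume "\<not> ?thesis"
    hence "Gf (sigma2 y \<rho> N S) < Gf (sigma2 y \<rho> N T)" by (intro Gf_mono) auto
    thus False using Gf_sat[OF sat] Gf_V[OF T] by linarith
  qed
  show ?thesis
  proof
    fix k assume k: "k \<in> T"
    have "k \<in> {1..K}" "sigma2 y \<rho> N T \<le> lam y \<rho> N k / gam \<rho> N k"
      using T k unfolding Vset_def by auto
    thus "k \<in> S" using sat le unfolding saturated_def by force
  qed
qed

definition ff :: "nat set \<Rightarrow> real \<Rightarrow> real" where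
  "ff S s = real CARD('d) * real N * ln s + frob_sq y N / s
     + (\<Sum>k\<in>S. gam \<rho> N k * ln (lam y \<rho> N k / gam \<rho> N k) + gam \<rho> N k
          - gam \<rho> N k * ln s - lam y \<rho> N k / s)"

lemma ff_alt: "ff S s = (real CARD('d) * real N - (\<Sum>k\<in>S. gam \<rho> N k)) * ln s
   + (frob_sq y N - (\<Sum>k\<in>S. lam y \<rho> N k)) / s
   + (\<Sum>k\<in>S. gam \<rho> N k * ln (lam y \<rho> N k / gam \<rho> N k)) + (\<Sum>k\<in>S. gam \<rho> N k)"
  unfolding ff_def
  by (simp add: sum.distrib sum_subtractf sum_distrib_right sum_divide_distrib sum_distrib_left algebra_simps diff_divide_distrib)

lemma ff_eq: assumes S: "S \<subseteq> {1..K}"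
  shows "ff S (sigma2 y \<rho> N S) = gfun y \<rho> N S + real CARD('d) * real N"
proof -
  have "(frob_sq y N - (\<Sum>k\<in>S. lam y \<rho> N k)) / sigma2 y \<rho> N S
     = real CARD('d) * real N - (\<Sum>k\<in>S. gam \<rho> N k)"
    using sig_eq[OF S] sigma_pos[OF S] by (simp add: field_simps)
  thus ?thesis unfolding ff_alt gfun_def by simp
qed

lemma ff_min: assumes S: "S \<subseteq> {1..K}" and s: "s > 0"
  shows "ff S (sigma2 y \<rho> N S) \<le> ff S s"
proof -
  define A where "A = frob_sq y N - (\<Sum>k\<in>S. lam y \<rho> N k)"
  define B where "B = real CARD('d) * real N - (\<Sum>k\<in>S. gam \<rho> N k)"
  define \<sigma> where "\<sigma> = sigma2 y \<rho> N S"
  have B: "B > 0" using B_pos[OF S] B_def by simp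
  have sp: "\<sigma> > 0" using sigma_pos[OF S] \<sigma>_def by simp
  have A: "A = \<sigma> * B" using sig_eq[OF S] A_def B_def \<sigma>_def by simp
  have "ln (\<sigma> / s) \<le> \<sigma> / s - 1" using sp s by (intro ln_le_minus_one) auto
  hence "ln \<sigma> \<le> ln s + \<sigma> / s - 1" using sp s by (simp add: ln_div)
  hence "B * ln \<sigma> \<le> B * (ln s + \<sigma> / s - 1)" using B by (intro mult_left_mono) auto
  hence "B * ln \<sigma> + A / \<sigma> \<le> B * ln s + A / s" using A sp B by (simp add: algebra_simps)
  thus ?thesis unfolding ff_alt A_def[symmetric] B_def[symmetric] \<sigma>_def[symmetric] by simp
qed

lemma ff_anti: assumes S: "S \<subseteq> S'" and S': "S' \<subseteq> {1..K}" and s: "s > 0"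
  shows "ff S' s \<le> ff S s"
proof -
  have fin: "finite S'" using S' finite_subset by blast
  have split: "S' = S \<union> (S' - S)" using S by auto
  define t where "t k = gam \<rho> N k * ln (lam y \<rho> N k / gam \<rho> N k) + gam \<rho> N k
          - gam \<rho> N k * ln s - lam y \<rho> N k / s" for k
  have neg: "t k \<le> 0" if k: "k \<in> {1..K}" for k
  proof -
    have g: "gam \<rho> N k > 0" and l: "lam y \<rho> N k > 0" using k gam_pos lam_pos by auto
    define r where "r = lam y \<rho> N k / gam \<rho> N k"
    have r: "r > 0" using g l r_def by simp
    have la: "lam y \<rho> N k = gam \<rho> N k * r" using g r_def by simp
    have "ln (r / s) \<le> r / s - 1" using r s by (intro ln_le_minus_one) auto
    hence "ln r - ln s + 1 - r / s \<le> 0" using r s by (simp add: ln_div)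
    hence "gam \<rho> N k * (ln r - ln s + 1 - r / s) \<le> 0" using g
      by (simp add: mult_nonneg_nonpos)
    thus ?thesis unfolding t_def r_def[symmetric] la by (simp add: algebra_simps)
  qed
  have "sum t S' = sum t S + sum t (S' - S)"
    using fin S by (metis add.commute sum.subset_diff)
  moreover have "sum t (S' - S) \<le> 0" by (rule sum_nonpos) (use neg S' in auto)
  ultimately have "sum t S' \<le> sum t S" by simp
  thus ?thesis unfolding ff_def t_def by simp
qed

lemma g_mono: assumes "S \<subseteq> S'" "S' \<subseteq> {1..K}"
  shows "gfun y \<rho> N S' \<le> gfun y \<rho> N S"
proof -
  have S: "S \<subseteq> {1..K}" using assms by auto
  have "gfun y \<rho> N S' + real CARD('d) * real N = ff S' (sigma2 y \<rho> N S')" using ff_eq[OF assms(2)] by simp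
  also have "\<dots> \<le> ff S' (sigma2 y \<rho> N S)" by (rule ff_min[OF assms(2) sigma_pos[OF S]])
  also have "\<dots> \<le> ff S (sigma2 y \<rho> N S)" by (rule ff_anti[OF assms sigma_pos[OF S]])
  also have "\<dots> = gfun y \<rho> N S + real CARD('d) * real N" using ff_eq[OF S] by simp
  finally show ?thesis by simp
qed

lemma reach_V: "(proc_step y \<rho> N K)\<^sup>*\<^sup>* {} S \<Longrightarrow> S \<in> Vset y \<rho> N K"
proof (induction rule: rtranclp_induct)
  case base
  then show ?case unfolding Vset_def by auto
next
  case (step S S')
  then obtain k where k: "k \<in> Lset y \<rho> N K S" and S': "S' = insert k S"
    unfolding proc_step_def by auto
  have S: "S \<subseteq> {1..K}" and SV: "\<forall>j\<in>S. sigma2 y \<rho> N S \<le> lam y \<rho> N j / gam \<rho> N j"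
    using step.IH unfolding Vset_def by auto
  have kI: "k \<in> {1..K} - S" and kle: "sigma2 y \<rho> N S \<le> lam y \<rho> N k / gam \<rho> N k"
    using k unfolding Lset_def by auto
  have m: "sigma2 y \<rho> N S' \<le> sigma2 y \<rho> N S" using med[OF S kI kle] S' by simp
  have "\<forall>j\<in>insert k S. sigma2 y \<rho> N (insert k S) \<le> lam y \<rho> N j / gam \<rho> N j"
    using m SV kle S' by (auto intro: order_trans)
  then show ?case unfolding Vset_def S' using S kI by auto
qed

end

theorem mainTheorem6:
  fixes y :: "nat \<Rightarrow> real^'d" and \<rho> :: "nat \<Rightarrow> nat \<Rightarrow> real" and N K :: nat
  assumes d2: "CARD('d) \<ge> 2" and N1: "N \<ge> 1" and K1: "K \<ge> 1"
    and rho_nonneg: "\<And>k i. k \<in> {1..K} \<Longrightarrow> i \<in> {1..N} \<Longrightarrow> \<rho> k i \<ge> 0"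
    and rho_sum: "\<And>i. i \<in> {1..N} \<Longrightarrow> (\<Sum>k\<in>{1..K}. \<rho> k i) = 1"
    and gam_pos: "\<And>k. k \<in> {1..K} \<Longrightarrow> gam \<rho> N k > 0"
    and lam_pos: "\<And>k. k \<in> {1..K} \<Longrightarrow> lam y \<rho> N k > 0"
    and sigma_pos: "\<And>S. S \<subseteq> {1..K} \<Longrightarrow> sigma2 y \<rho> N S > 0"
  shows "\<not> (\<exists>f. f 0 = {} \<and> (\<forall>n. proc_step y \<rho> N K (f n) (f (Suc n))))
    \<and> (\<forall>S. (proc_step y \<rho> N K)\<^sup>*\<^sup>* {} S \<longrightarrow> S \<in> Vset y \<rho> N K)
    \<and> (\<forall>S. (proc_step y \<rho> N K)\<^sup>*\<^sup>* {} S \<and> Lset y \<rho> N K S = {} \<longrightarrow>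
           saturated y \<rho> N K S
           \<and> (\<forall>T. saturated y \<rho> N K T \<longrightarrow> T = S)
           \<and> (\<forall>T\<in>Vset y \<rho> N K. gfun y \<rho> N S \<le> gfun y \<rho> N T))"
proof (intro conjI allI impI ballI)
  note ctx = d2 N1 rho_sum gam_pos lam_pos sigma_pos
  show "\<not> (\<exists>f. f 0 = {} \<and> (\<forall>n. proc_step y \<rho> N K (f n) (f (Suc n))))"
  proof
    assume "\<exists>f. f 0 = {} \<and> (\<forall>n. proc_step y \<rho> N K (f n) (f (Suc n)))"
    then obtain f where f0: "f 0 = {}" and fs: "\<And>n. proc_step y \<rho> N K (f n) (f (Suc n))" by blast
    have inv: "f n \<subseteq> {1..K} \<and> card (f n) = n" for n
    proof (induction n)
      case 0 then show ?case using f0 by simp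
    next
      case (Suc n)
      obtain k where k: "k \<in> {1..K} - f n" and e: "f (Suc n) = insert k (f n)"
        using fs[of n] unfolding proc_step_def Lset_def by auto
      have "finite (f n)" using Suc.IH finite_subset by blast
      then show ?case using Suc.IH k e by simp
    qed
    have "card (f (Suc K)) \<le> card {1..K}" using inv[of "Suc K"] by (intro card_mono) auto
    thus False using inv[of "Suc K"] by simp
  qed
next
  fix S assume "(proc_step y \<rho> N K)\<^sup>*\<^sup>* {} S"
  thus "S \<in> Vset y \<rho> N K" using reach_V[OF d2 N1 rho_sum gam_pos lam_pos sigma_pos] by blast
next
  fix S assume a: "(proc_step y \<rho> N K)\<^sup>*\<^sup>* {} S \<and> Lset y \<rho> N K S = {}"
  have V: "S \<in> Vset y \<rho> N K" using a reach_V[OF d2 N1 rho_sum gam_pos lam_pos sigma_pos] by blast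
  show sat: "saturated y \<rho> N K S"
  proof -
    have "\<forall>j\<in>{1..K}-S. \<not> (sigma2 y \<rho> N S \<le> lam y \<rho> N j / gam \<rho> N j)"
      using a unfolding Lset_def by blast
    thus ?thesis using V unfolding saturated_def by (auto simp: not_le)
  qed
  {
    fix T assume T: "saturated y \<rho> N K T"
    have "T \<subseteq> S" using V_sub_sat[OF d2 N1 rho_sum gam_pos lam_pos sigma_pos sat] T
      unfolding saturated_def by blast
    moreover have "S \<subseteq> T" using V_sub_sat[OF d2 N1 rho_sum gam_pos lam_pos sigma_pos T] V by blast
    ultimately show "T = S" by blast
  }
  {
    fix T assume T: "T \<in> Vset y \<rho> N K"
    have "T \<subseteq> S" using V_sub_sat[OF d2 N1 rho_sum gam_pos lam_pos sigma_pos sat T] .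
    moreover have "S \<subseteq> {1..K}" using V unfolding Vset_def by auto
    ultimately show "gfun y \<rho> N S \<le> gfun y \<rho> N T"
      using g_mono[OF d2 N1 rho_sum gam_pos lam_pos sigma_pos] by blast
  }
qed

end
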